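(* Let $L\in\mathbb{R}^{n\times m}$ be arbitrary, let $F_d\in\mathbb{R}^{p\times n}$ be a deadbeat gain (all eigenvalues of $A_{F_d}=A+BF_d$ equal zero), let $s\ge1$, $k$ be integers, and let $(u,y,r,\hat x)$ be a solution of the kernel-based model with gain $L$ on the time interval $[k-n+1,k+s]$. Then for every $F\in\mathbb{R}^{p\times n}$ there exists $v\in\mathbb{R}^{(s+n)p}$ such that $$\begin{bmatrix}u_s(k)\\ y_s(k)\end{bmatrix}=I_{G,s}(F)\,v+I_{C,s}(F_d,L)\,r_{s+n}(k-n).$$
   Context: Consider the discrete-time LTI system $x(k+1)=Ax(k)+Bu(k)$, $y(k)=Cx(k)+Du(k)$ with $u\in\mathbb{R}^p$, $x\in\mathbb{R}^n$, $y\in\mathbb{R}^m$, $n\ge 1$, and $(A,B,C,D)$ a minimal (controllable and observable) realization. For a sequence $\phi$ and integers $k$, $s\ge1$, the stacked vector is $\phi_s(k)=[\phi(k+1)^T,\dots,\phi(k+s)^T]^T$. For $F\in\mathbb{R}^{p\times n}$ put $A_F=A+BF$ and $C_F=C+DF$. Kernel-based model with observer gain $L\in\mathbb{R}^{n\times m}$: sequences $u,y,r\ (\in\mathbb{R}^m),\hat x$ satisfying $\hat x(k+1)=A\hat x(k)+Bu(k)+Lr(k)$, $y(k)=C\hat x(k)+Du(k)+r(k)$ ($r$ is the residual). Finite-sample image representation: $M_s(F)\in\mathbb{R}^{sp\times(s+n)p}$, $N_s(F)\in\mathbb{R}^{sm\times(s+n)p}$ with $(l,j)$ blocks ($l=1,\dots,s$;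 $j=1,\dots,s+n$) $M_{n+l-j}$, $N_{n+l-j}$, where $M_k=FA_F^{k-1}B$ ($k\ge1$), $M_0=I_p$, $M_k=0$ ($k<0$), $N_k=C_FA_F^{k-1}B$ ($k\ge1$), $N_0=D$, $N_k=0$ ($k<0$); $I_{G,s}(F)=\begin{bmatrix}M_s(F)\\ N_s(F)\end{bmatrix}$. For gains $F,L$: $\hat Y_s(F,L)\in\mathbb{R}^{sp\times(s+n)m}$, $\hat X_s(F,L)\in\mathbb{R}^{sm\times(s+n)m}$ with $(l,j)$ blocks $\hat Y_{n+l-j}$, $\hat X_{n+l-j}$, where $\hat Y_k=FA_F^{k-1}L$ ($k\ge1$), $\hat Y_k=0$ ($k\le0$), $\hat X_k=C_FA_F^{k-1}L$ ($k\ge1$), $\hat X_0=I_m$, $\hat X_k=0$ ($k<0$); $I_{C,s}(F,L)=\begin{bmatrix}\hat Y_s(F,L)\\ \hat X_s(F,L)\end{bmatrix}$. *)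

theory Defs
  imports "HOL-Analysis.Analysis"
begin

primrec matpow :: "real^'n^'n \<Rightarrow> nat \<Rightarrow> real^'n^'n" where
  "matpow M 0 = mat 1"
| "matpow M (Suc k) = M ** matpow M k"

definition controllable :: "real^'n^'n \<Rightarrow> real^'p^'n \<Rightarrow> bool" where
  "controllable A B \<longleftrightarrow>
     span (\<Union>k<CARD('n). range (\<lambda>w. matpow A k *v (B *v w))) = UNIV"

definition observable :: "real^'n^'n \<Rightarrow> real^'n^'m \<Rightarrow> bool" where
  "observable A C \<longleftrightarrow>
     (\<forall>x. (\<forall>k<CARD('n). C *v (matpow A k *v x) = 0) \<longrightarrow> x = 0)"

definition minimal_realization ::
  "real^'n^'n \<Rightarrow> real^'p^'n \<Rightarrow> real^'n^'m \<Rightarrow> real^'p^'m \<Rightarrow> bool" where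
  "minimal_realization A B C D \<longleftrightarrow> controllable A B \<and> observable A C"

definition cmat :: "real^'n^'n \<Rightarrow> complex^'n^'n" where
  "cmat M = (\<chi> i j. complex_of_real (M $ i $ j))"

definition is_eigenvalue :: "real^'n^'n \<Rightarrow> complex \<Rightarrow> bool" where
  "is_eigenvalue M c \<longleftrightarrow> (\<exists>x::complex^'n. x \<noteq> 0 \<and> cmat M *v x = c *s x)"

definition deadbeat :: "real^'n^'n \<Rightarrow> real^'p^'n \<Rightarrow> real^'n^'p \<Rightarrow> bool" where
  "deadbeat A B F \<longleftrightarrow> (\<forall>c. is_eigenvalue (A + B ** F) c \<longrightarrow> c = 0)"

definition kernel_model_on ::
  "real^'n^'n \<Rightarrow> real^'p^'n \<Rightarrow> real^'n^'m \<Rightarrow> real^'p^'m \<Rightarrow> real^'m^'n \<Rightarrow>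
   (int \<Rightarrow> real^'p) \<Rightarrow> (int \<Rightarrow> real^'m) \<Rightarrow> (int \<Rightarrow> real^'m) \<Rightarrow> (int \<Rightarrow> real^'n) \<Rightarrow>
   int \<Rightarrow> int \<Rightarrow> bool" where
  "kernel_model_on A B C D L u y r xh t0 t1 \<longleftrightarrow>
     (\<forall>t. t0 \<le> t \<and> t \<le> t1 \<longrightarrow>
        xh (t + 1) = A *v xh t + B *v u t + L *v r t \<and>
        y t = C *v xh t + D *v u t + r t)"

text \<open>Markov-parameter blocks. A_F = A + B F, C_F = C + D F.\<close>
definition Mblk :: "real^'n^'n \<Rightarrow> real^'p^'n \<Rightarrow> real^'n^'p \<Rightarrow> int \<Rightarrow> real^'p^'p" where
  "Mblk A B F k = (if k \<ge> 1 then F ** matpow (A + B ** F) (nat (k - 1)) ** B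
                   else if k = 0 then mat 1 else 0)"

definition Nblk :: "real^'n^'n \<Rightarrow> real^'p^'n \<Rightarrow> real^'n^'m \<Rightarrow> real^'p^'m \<Rightarrow> real^'n^'p
                    \<Rightarrow> int \<Rightarrow> real^'p^'m" where
  "Nblk A B C D F k = (if k \<ge> 1 then (C + D ** F) ** matpow (A + B ** F) (nat (k - 1)) ** B
                       else if k = 0 then D else 0)"

definition Yhat_blk :: "real^'n^'n \<Rightarrow> real^'p^'n \<Rightarrow> real^'n^'p \<Rightarrow> real^'m^'n
                        \<Rightarrow> int \<Rightarrow> real^'m^'p" where
  "Yhat_blk A B F L k = (if k \<ge> 1 then F ** matpow (A + B ** F) (nat (k - 1)) ** L else 0)"

definition Xhat_blk :: "real^'n^'n \<Rightarrow> real^'p^'n \<Rightarrow> real^'n^'m \<Rightarrow> real^'p^'m \<Rightarrow> real^'n^'p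
                        \<Rightarrow> real^'m^'n \<Rightarrow> int \<Rightarrow> real^'m^'m" where
  "Xhat_blk A B C D F L k = (if k \<ge> 1 then (C + D ** F) ** matpow (A + B ** F) (nat (k - 1)) ** L
                             else if k = 0 then mat 1 else 0)"

text \<open>Block vectors are represented as functions from block index (1-based) to blocks.
  Product of the s x (s+n) block matrix with (l,j) block T(n+l-j) and a block vector w;
  the result is the block vector indexed by l = 1..s.\<close>
definition block_toeplitz_mult ::
  "nat \<Rightarrow> nat \<Rightarrow> (int \<Rightarrow> real^'a^'b) \<Rightarrow> (nat \<Rightarrow> real^'a) \<Rightarrow> nat \<Rightarrow> real^'b" where
  "block_toeplitz_mult n s T w l = (\<Sum>j = 1..s + n. T (int n + int l - int j) *v w j)"

text \<open>Stacked vector phi_s(k) = [phi(k+1); ...; phi(k+s)], block l is phi(k+l).\<close>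
definition stack :: "(int \<Rightarrow> 'a) \<Rightarrow> int \<Rightarrow> nat \<Rightarrow> 'a" where
  "stack \<phi> k l = \<phi> (k + int l)"

end

theory Submission
  imports Defs
begin


lemma mv_sum: "(M::real^'a^'b) *v (\<Sum>q\<in>S. g q) = (\<Sum>q\<in>S. M *v g q)"
  using linear_sum[OF matrix_vector_mul_linear, of M g S] by simp

lemma conv_step:
  fixes M :: "real^'n^'n"
  shows "M *v (\<Sum>q<i. matpow M (i-1-q) *v g q) + g i
         = (\<Sum>q<Suc i. matpow M (Suc i-1-q) *v g q)"
proof -
  have "M *v (\<Sum>q<i. matpow M (i-1-q) *v g q) = (\<Sum>q<i. matpow M (Suc i-1-q) *v g q)"
    unfolding mv_sum
  proof (rule sum.cong)
    fix q assume "q \<in> {..<i}"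
    then have "Suc i - 1 - q = Suc (i-1-q)" by auto
    then show "M *v (matpow M (i - 1 - q) *v g q) = matpow M (Suc i - 1 - q) *v g q"
      by (simp add: matrix_vector_mul_assoc)
  qed simp
  then show ?thesis by simp
qed

lemma toeplitz_split:
  fixes T :: "int \<Rightarrow> real^'a^'b"
  assumes neg: "\<And>k. k < 0 \<Longrightarrow> T k = 0" and l: "1 \<le> l" "l \<le> s"
  shows "block_toeplitz_mult N s T w l
     = (\<Sum>q<N+l-1. T (int (N+l-1-q)) *v w (Suc q)) + T 0 *v w (N+l)"
proof -
  have "block_toeplitz_mult N s T w l = (\<Sum>j = 1..N+l. T (int N + int l - int j) *v w j)"
    unfolding block_toeplitz_mult_def
    by (rule sum.mono_neutral_right) (use l neg in auto)
  also have "\<dots> = (\<Sum>q<N+l. T (int N + int l - int (Suc q)) *v w (Suc q))"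
    by (simp add: sum.atLeast1_atMost_eq)
  also have "\<dots> = (\<Sum>q<Suc (N+l-1). T (int N + int l - int (Suc q)) *v w (Suc q))"
    using l by simp
  also have "\<dots> = (\<Sum>q<N+l-1. T (int (N+l-1-q)) *v w (Suc q)) + T 0 *v w (N+l)"
    apply (subst sum.lessThan_Suc)
    apply (rule arg_cong2[where f="(+)"])
     apply (rule sum.cong, simp)
    using l by (auto simp: of_nat_diff)
  finally show ?thesis .
qed

lemma Mblk_pos: "Mblk A B F (int (Suc j)) = F ** matpow (A + B ** F) j ** B"
  by (simp add: Mblk_def)
lemma Nblk_pos: "Nblk A B C D F (int (Suc j)) = (C + D ** F) ** matpow (A + B ** F) j ** B"
  by (simp add: Nblk_def)
lemma Yhat_pos: "Yhat_blk A B F L (int (Suc j)) = F ** matpow (A + B ** F) j ** L"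
  by (simp add: Yhat_blk_def)
lemma Xhat_pos: "Xhat_blk A B C D F L (int (Suc j)) = (C + D ** F) ** matpow (A + B ** F) j ** L"
  by (simp add: Xhat_blk_def)

lemma gen_in_span:
  fixes A :: "real^'n^'n" and B :: "real^'p^'n" and F :: "real^'n^'p"
  shows "matpow A k *v (B *v w) \<in> span (\<Union>j\<le>k. range (\<lambda>w. matpow (A + B ** F) j *v (B *v w)))"
proof (induction k arbitrary: w)
  case 0
  show ?case by (rule span_base) (auto intro!: exI[of _ w])
next
  case (Suc k)
  let ?G = "\<lambda>k. (\<Union>j\<le>k. range (\<lambda>w. matpow (A + B ** F) j *v (B *v w)))"
  have sub: "(\<lambda>x. A *v x) ` ?G k \<subseteq> span (?G (Suc k))"
  proof
    fix x assume "x \<in> (\<lambda>x. A *v x) ` ?G k"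
    then obtain j w' where j: "j \<le> k" and x: "x = A *v (matpow (A + B ** F) j *v (B *v w'))"
      by auto
    have eqA: "A = (A + B ** F) - B ** F" by simp
    have "x = matpow (A + B ** F) (Suc j) *v (B *v w')
              - matpow (A + B ** F) 0 *v (B *v (F *v (matpow (A + B ** F) j *v (B *v w'))))"
    proof -
      define y where "y = matpow (A + B ** F) j *v (B *v w')"
      have "A *v y = (A + B ** F) *v y - B *v (F *v y)"
        by (simp add: matrix_vector_mult_add_rdistrib matrix_vector_mul_assoc)
      moreover have "matpow (A + B ** F) (Suc j) *v (B *v w') = (A + B ** F) *v y"
        by (simp add: y_def matrix_vector_mul_assoc matrix_mul_assoc)
      ultimately show ?thesis by (simp add: x y_def)
    qed
    moreover have "matpow (A + B ** F) (Suc j) *v (B *v w') \<in> span (?G (Suc k))"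
      by (rule span_base, rule UN_I[of "Suc j"]) (use j in auto)
    moreover have "matpow (A + B ** F) 0 *v (B *v (F *v (matpow (A + B ** F) j *v (B *v w')))) \<in> span (?G (Suc k))"
      by (rule span_base) blast
    ultimately show "x \<in> span (?G (Suc k))" by (simp add: span_diff)
  qed
  have "matpow A (Suc k) *v (B *v w) = A *v (matpow A k *v (B *v w))"
    by (simp add: matrix_vector_mul_assoc matrix_mul_assoc)
  also have "\<dots> \<in> (\<lambda>x. A *v x) ` span (?G k)" using Suc.IH by blast
  also have "\<dots> = span ((\<lambda>x. A *v x) ` ?G k)"
    by (rule span_linear_image[OF matrix_vector_mul_linear, symmetric])
  also have "\<dots> \<subseteq> span (?G (Suc k))"
    using sub by (metis span_minimal subspace_span)
  finally show ?case .
qed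

lemma reach:
  fixes A :: "real^'n^'n" and B :: "real^'p^'n" and F :: "real^'n^'p"
  assumes "controllable A B"
  shows "\<exists>w. x = (\<Sum>q<CARD('n). matpow (A + B ** F) (CARD('n)-1-q) *v (B *v w q))"
proof -
  let ?N = "CARD('n)"
  let ?R = "{x. \<exists>w. x = (\<Sum>q<?N. matpow (A + B ** F) (?N-1-q) *v (B *v w q))}"
  have subR: "subspace ?R"
    unfolding subspace_def
  proof (intro conjI ballI allI)
    show "0 \<in> ?R" by (auto intro!: exI[of _ "\<lambda>q. 0"])
  next
    fix x y assume "x \<in> ?R" "y \<in> ?R"
    then obtain w1 w2 where "x = (\<Sum>q<?N. matpow (A + B ** F) (?N-1-q) *v (B *v w1 q))"
      "y = (\<Sum>q<?N. matpow (A + B ** F) (?N-1-q) *v (B *v w2 q))" by blast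
    then show "x + y \<in> ?R"
      by (auto intro!: exI[of _ "\<lambda>q. w1 q + w2 q"] simp: matrix_vector_right_distrib sum.distrib)
  next
    fix c :: real and x assume "x \<in> ?R"
    then obtain w1 where "x = (\<Sum>q<?N. matpow (A + B ** F) (?N-1-q) *v (B *v w1 q))" by blast
    then show "c *\<^sub>R x \<in> ?R"
      by (auto intro!: exI[of _ "\<lambda>q. c *\<^sub>R w1 q"] simp: matrix_vector_mult_scaleR scaleR_sum_right)
  qed
  have G: "(\<Union>j<?N. range (\<lambda>w. matpow (A + B ** F) j *v (B *v w))) \<subseteq> ?R"
  proof
    fix x assume "x \<in> (\<Union>j<?N. range (\<lambda>w. matpow (A + B ** F) j *v (B *v w)))"
    then obtain j w where j: "j < ?N" and x: "x = matpow (A + B ** F) j *v (B *v w)" by auto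
    have "(\<Sum>q<?N. matpow (A + B ** F) (?N-1-q) *v (B *v (if q = ?N-1-j then w else 0)))
       = (\<Sum>q<?N. if q = ?N-1-j then matpow (A + B ** F) j *v (B *v w) else 0)"
      by (rule sum.cong) (use j in auto)
    also have "\<dots> = x" using j x by (simp add: sum.delta)
    finally show "x \<in> ?R" by (auto intro!: exI[of _ "\<lambda>q. if q = ?N-1-j then w else 0"])
  qed
  have "UNIV = span (\<Union>k<?N. range (\<lambda>w. matpow A k *v (B *v w)))"
    using assms by (simp add: controllable_def)
  also have "\<dots> \<subseteq> span (\<Union>j<?N. range (\<lambda>w. matpow (A + B ** F) j *v (B *v w)))"
  proof (rule span_minimal[OF _ subspace_span])
    show "(\<Union>k<?N. range (\<lambda>w. matpow A k *v (B *v w))) \<subseteq> span (\<Union>j<?N. range (\<lambda>w. matpow (A + B ** F) j *v (B *v w)))"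
    proof
      fix x assume "x \<in> (\<Union>k<?N. range (\<lambda>w. matpow A k *v (B *v w)))"
      then obtain k w where k: "k < ?N" and x: "x = matpow A k *v (B *v w)" by auto
      have "x \<in> span (\<Union>j\<le>k. range (\<lambda>w. matpow (A + B ** F) j *v (B *v w)))"
        unfolding x by (rule gen_in_span)
      moreover have "span (\<Union>j\<le>k. range (\<lambda>w. matpow (A + B ** F) j *v (B *v w)))
          \<subseteq> span (\<Union>j<?N. range (\<lambda>w. matpow (A + B ** F) j *v (B *v w)))"
        by (rule span_mono, rule UN_mono) (use k in auto)
      ultimately show "x \<in> span (\<Union>j<?N. range (\<lambda>w. matpow (A + B ** F) j *v (B *v w)))" by blast
    qed
  qed
  also have "\<dots> \<subseteq> ?R" by (rule span_minimal[OF G subR])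
  finally show ?thesis by blast
qed



lemma blk_sum:
  fixes T :: "int \<Rightarrow> real^'a^'b"
  assumes "\<And>j. T (int (Suc j)) = G j"
  shows "(\<Sum>q<i. T (int (i-q)) *v w (Suc q)) = (\<Sum>q<i. G (i-1-q) *v w (Suc q))"
proof (rule sum.cong[OF refl])
  fix q assume "q \<in> {..<i}"
  then have "i - q = Suc (i-1-q)" by auto
  then show "T (int (i-q)) *v w (Suc q) = G (i-1-q) *v w (Suc q)" using assms by metis
qed

theorem lemma4:
  fixes A :: "real^'n^'n" and B :: "real^'p^'n" and C :: "real^'n^'m" and D :: "real^'p^'m"
    and L :: "real^'m^'n" and Fd :: "real^'n^'p"
    and u :: "int \<Rightarrow> real^'p" and y r :: "int \<Rightarrow> real^'m" and xh :: "int \<Rightarrow> real^'n"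
    and s :: nat and k :: int
  assumes "minimal_realization A B C D"
    and "deadbeat A B Fd"
    and "s \<ge> 1"
    and "kernel_model_on A B C D L u y r xh (k - int CARD('n) + 1) (k + int s)"
  shows "\<forall>F :: real^'n^'p. \<exists>v :: nat \<Rightarrow> real^'p. \<forall>l \<in> {1..s}.
           stack u k l = block_toeplitz_mult CARD('n) s (Mblk A B F) v l
                         + block_toeplitz_mult CARD('n) s (Yhat_blk A B Fd L)
                             (stack r (k - int CARD('n))) l
         \<and> stack y k l = block_toeplitz_mult CARD('n) s (Nblk A B C D F) v l
                         + block_toeplitz_mult CARD('n) s (Xhat_blk A B C D Fd L)
                             (stack r (k - int CARD('n))) l"
  proof (intro allI)
  fix F :: "real^'n^'p"
  define N where "N = CARD('n)"
  define t0 where "t0 = k - int N + 1"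
  define Ad where "Ad = A + B ** Fd"
  define AF where "AF = A + B ** F"
  have model: "xh (t0 + int i + 1) = A *v xh (t0 + int i) + B *v u (t0 + int i) + L *v r (t0 + int i)
        \<and> y (t0 + int i) = C *v xh (t0 + int i) + D *v u (t0 + int i) + r (t0 + int i)"
    if "i \<le> N + s - 1" for i
    using assms(4) that assms(3) unfolding kernel_model_on_def t0_def N_def
    by (elim allE[of _ "k - int CARD('n) + 1 + int i"]) auto
  define z where "z i = (\<Sum>q<i. matpow Ad (i-1-q) *v (L *v r (t0 + int q)))" for i
  have zrec: "z (Suc i) = Ad *v z i + L *v r (t0 + int i)" for i
    unfolding z_def using conv_step[of Ad i "\<lambda>q. L *v r (t0 + int q)"] by simp
  define xp where "xp i = xh (t0 + int i) - z i" for i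
  define up where "up i = u (t0 + int i) - Fd *v z i" for i
  have xrec: "xp (Suc i) = A *v xp i + B *v up i" if "i \<le> N + s - 1" for i
  proof -
    have e: "t0 + int (Suc i) = t0 + int i + 1" by simp
    show ?thesis
      unfolding xp_def up_def e zrec using model[OF that]
      by (simp add: Ad_def algebra_simps matrix_vector_mul_assoc)
  qed
  obtain w where w: "xp N = (\<Sum>q<N. matpow AF (N-1-q) *v (B *v w q))"
    using reach[OF conjunct1[OF assms(1)[unfolded minimal_realization_def]], where F=F and x="xp N"]
    unfolding N_def AF_def by blast
  define v where "v j = (if j \<le> N then w (j-1) else up (j-1) - F *v xp (j-1))" for j
  have closed: "xp (N+m) = (\<Sum>q<N+m. matpow AF (N+m-1-q) *v (B *v v (Suc q)))" if "m < s" for m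
    using that
  proof (induction m)
    case 0
    show ?case using w by (simp add: v_def)
  next
    case (Suc m)
    have "xp (N + Suc m) = xp (Suc (N+m))" by simp
    also have "\<dots> = A *v xp (N+m) + B *v up (N+m)"
      by (rule xrec) (use Suc.prems in auto)
    also have "\<dots> = AF *v xp (N+m) + B *v v (Suc (N+m))"
      by (simp add: v_def AF_def algebra_simps matrix_vector_mul_assoc)
    also have "\<dots> = (\<Sum>q<Suc (N+m). matpow AF (Suc (N+m)-1-q) *v (B *v v (Suc q)))"
      using Suc.IH Suc.prems conv_step[of AF "N+m" "\<lambda>q. B *v v (Suc q)"] by simp
    finally show ?case by simp
  qed
  show "\<exists>v :: nat \<Rightarrow> real^'p. \<forall>l \<in> {1..s}.
           stack u k l = block_toeplitz_mult CARD('n) s (Mblk A B F) v l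
                         + block_toeplitz_mult CARD('n) s (Yhat_blk A B Fd L)
                             (stack r (k - int CARD('n))) l
         \<and> stack y k l = block_toeplitz_mult CARD('n) s (Nblk A B C D F) v l
                         + block_toeplitz_mult CARD('n) s (Xhat_blk A B C D Fd L)
                             (stack r (k - int CARD('n))) l"
  proof (intro exI[of _ v] ballI)
    fix l assume l: "l \<in> {1..s}"
    then have l1: "1 \<le> l" "l \<le> s" by auto
    define i where "i = N + l - 1"
    have iN: "N + l = Suc i" using l1 by (simp add: i_def)
    have kl: "k + int l = t0 + int i" using l1 by (simp add: i_def t0_def)
    have xpi: "xp i = (\<Sum>q<i. matpow AF (i-1-q) *v (B *v v (Suc q)))"
      using closed[of "l-1"] l1 by (simp add: i_def)
    have vi: "v (Suc i) = up i - F *v xp i" using l1 by (simp add: v_def i_def)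
    have sr: "stack r (k - int N) (Suc q) = r (t0 + int q)" for q
      by (simp add: stack_def t0_def add.assoc)
    have srl: "stack r (k - int N) (N + l) = r (t0 + int i)"
      using kl by (simp add: stack_def)
    have pos: "int (i - q) = int (Suc (i - 1 - q))" if "q \<in> {..<i}" for q
      using that by auto
    have sM: "(\<Sum>q<i. Mblk A B F (int (i - q)) *v v (Suc q)) = F *v xp i"
      unfolding xpi mv_sum blk_sum[where T="Mblk A B F" and G="\<lambda>j. F ** matpow (A + B ** F) j ** B", OF Mblk_pos]
      by (rule sum.cong[OF refl]) (simp add: AF_def matrix_vector_mul_assoc matrix_mul_assoc)
    have sN: "(\<Sum>q<i. Nblk A B C D F (int (i - q)) *v v (Suc q)) = (C + D ** F) *v xp i"
      unfolding xpi mv_sum blk_sum[where T="Nblk A B C D F" and G="\<lambda>j. (C + D ** F) ** matpow (A + B ** F) j ** B", OF Nblk_pos]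
      by (rule sum.cong[OF refl]) (simp add: AF_def matrix_vector_mul_assoc matrix_mul_assoc)
    have sY: "(\<Sum>q<i. Yhat_blk A B Fd L (int (i - q)) *v stack r (k - int N) (Suc q)) = Fd *v z i"
      unfolding blk_sum[where T="Yhat_blk A B Fd L" and G="\<lambda>j. Fd ** matpow (A + B ** Fd) j ** L", OF Yhat_pos] unfolding z_def mv_sum sr
      by (rule sum.cong[OF refl]) (simp add: Ad_def matrix_vector_mul_assoc matrix_mul_assoc)
    have sX: "(\<Sum>q<i. Xhat_blk A B C D Fd L (int (i - q)) *v stack r (k - int N) (Suc q)) = (C + D ** Fd) *v z i"
      unfolding blk_sum[where T="Xhat_blk A B C D Fd L" and G="\<lambda>j. (C + D ** Fd) ** matpow (A + B ** Fd) j ** L", OF Xhat_pos] unfolding z_def mv_sum sr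
      by (rule sum.cong[OF refl]) (simp add: Ad_def matrix_vector_mul_assoc matrix_mul_assoc)
    have il: "N + l - 1 = i" by (simp add: i_def)
    have tM: "block_toeplitz_mult N s (Mblk A B F) v l = F *v xp i + v (Suc i)"
    proof -
      have "block_toeplitz_mult N s (Mblk A B F) v l
         = (\<Sum>q<N+l-1. Mblk A B F (int (N+l-1-q)) *v v (Suc q)) + Mblk A B F 0 *v v (N+l)"
        by (rule toeplitz_split[OF _ l1]) (simp add: Mblk_def)
      moreover have "Mblk A B F 0 = mat 1" by (simp add: Mblk_def)
      ultimately show ?thesis by (simp only: il sM) (simp add: iN)
    qed
    have tN: "block_toeplitz_mult N s (Nblk A B C D F) v l = (C + D ** F) *v xp i + D *v v (Suc i)"
    proof -
      have "block_toeplitz_mult N s (Nblk A B C D F) v l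
         = (\<Sum>q<N+l-1. Nblk A B C D F (int (N+l-1-q)) *v v (Suc q)) + Nblk A B C D F 0 *v v (N+l)"
        by (rule toeplitz_split[OF _ l1]) (simp add: Nblk_def)
      moreover have "Nblk A B C D F 0 = D" by (simp add: Nblk_def)
      ultimately show ?thesis by (simp only: il sN) (simp add: iN)
    qed
    have tY: "block_toeplitz_mult N s (Yhat_blk A B Fd L) (stack r (k - int N)) l = Fd *v z i"
    proof -
      have "block_toeplitz_mult N s (Yhat_blk A B Fd L) (stack r (k - int N)) l
         = (\<Sum>q<N+l-1. Yhat_blk A B Fd L (int (N+l-1-q)) *v stack r (k - int N) (Suc q))
           + Yhat_blk A B Fd L 0 *v stack r (k - int N) (N+l)"
        by (rule toeplitz_split[OF _ l1]) (simp add: Yhat_blk_def)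
      moreover have "Yhat_blk A B Fd L 0 = 0" by (simp add: Yhat_blk_def)
      ultimately show ?thesis by (simp only: il sY) simp
    qed
    have tX: "block_toeplitz_mult N s (Xhat_blk A B C D Fd L) (stack r (k - int N)) l
              = (C + D ** Fd) *v z i + r (t0 + int i)"
    proof -
      have "block_toeplitz_mult N s (Xhat_blk A B C D Fd L) (stack r (k - int N)) l
         = (\<Sum>q<N+l-1. Xhat_blk A B C D Fd L (int (N+l-1-q)) *v stack r (k - int N) (Suc q))
           + Xhat_blk A B C D Fd L 0 *v stack r (k - int N) (N+l)"
        by (rule toeplitz_split[OF _ l1]) (simp add: Xhat_blk_def)
      moreover have "Xhat_blk A B C D Fd L 0 = mat 1" by (simp add: Xhat_blk_def)
      ultimately show ?thesis by (simp only: il sX srl) simp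
    qed
    have mi: "i \<le> N + s - 1" using l1 by (simp add: i_def)
    have U: "stack u k l = F *v xp i + v (Suc i) + Fd *v z i"
      unfolding stack_def kl vi by (simp add: up_def)
    have Y: "stack y k l = (C + D ** F) *v xp i + D *v v (Suc i) + ((C + D ** Fd) *v z i + r (t0 + int i))"
      unfolding stack_def kl vi using conjunct2[OF model[OF mi]]
      by (simp add: up_def xp_def algebra_simps matrix_vector_mul_assoc)
    show "stack u k l = block_toeplitz_mult CARD('n) s (Mblk A B F) v l
                         + block_toeplitz_mult CARD('n) s (Yhat_blk A B Fd L)
                             (stack r (k - int CARD('n))) l
         \<and> stack y k l = block_toeplitz_mult CARD('n) s (Nblk A B C D F) v l
                         + block_toeplitz_mult CARD('n) s (Xhat_blk A B C D Fd L)
                             (stack r (k - int CARD('n))) l"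
      using U Y tM tN tY tX unfolding N_def by simp
  qed
qed

end
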